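(* Let $r\geq 1$, $k\geq 2$, $G=(N^k,\Theta)$ a downward directed lattice graph, $F$ a partial selection function, $D\subset N^k$ finite, and $\rho_D:D\to N$ with $\rho_D(x)\geq\min(x)$ for all $x\in D$. Then for all $z\in D$: if $\Phi^D_z\neq\emptyset$ then $h^\rho_D(z)=\hat{s}_D(z)<\max(z)$; if $\Phi^D_z=\emptyset$ then $h^\rho_D(z)=\rho_D(z)$ and $\hat{s}_D(z)=\max(z)$. Moreover, for any $E\subset N$ of cardinality $p\geq 2$ with $E^k\subseteq D$, $\hat{s}_D$ is regressively regular over $E$ if and only if $h^\rho_D$ is regressively regular over $E$.
   Context: $N$ denotes the nonnegative integers. For $z\in N^k$, $\max(z)$, $\min(z)$ are the max and min coordinates. A directed graph $G=(N^k,\Theta)$ is a downward directed lattice graph if every edge $(x,y)\in\Theta$ satisfies $\max(x)>\max(y)$. For finite $D$, $\Theta_D=\{(x,y)\in\Theta:x,y\in D\}$ and $G^z_D=\{x:(z,x)\in\Theta_D\}$. A partial selection function is a partial function $F: N^k\times(N^k\times N)^r\rightarrow N$ such that whenever $F(x,((y_1,n_1),\ldots,(y_r,n_r)))$ is defined it equals some $n_i$. $\hat{s}_D$: defined recursively on $\max(z)$: $\Phi^D_z$ is the set of defined values $F[z,(y_1,n_1),\ldots,(y_r,n_r)]$ over $y_1,\ldots,y_r\in G^z_D$, where $n_i=\hat{s}_D(y_i)$ if $\Phi^D_{y_i}\neq\emptyset$ and $n_i=\min(y_i)$ otherwise; $\hat{s}_D(z)=\max(z)$ if $\Phi^D_z=\emptyset$,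 else $\hat{s}_D(z)=\min\Phi^D_z$. $h^\rho_D$: defined by the same recursion, with $\Phi^D_z$ the set of defined values $F[z,(y_1,n_1),\ldots,(y_r,n_r)]$, $y_i\in G^z_D$, where $n_i=h^\rho_D(y_i)$ if $\Phi^D_{y_i}\neq\emptyset$ and $n_i=\min(y_i)$ otherwise; $h^\rho_D(z)=\rho_D(z)$ if $\Phi^D_z=\emptyset$, else $h^\rho_D(z)=\min\Phi^D_z$. Order types: $x=(n_i)$ and $y=(m_i)$ are order equivalent if $\{(i,j):n_i<n_j\}=\{(i,j):m_i<m_j\}$ and $\{(i,j):n_i=n_j\}=\{(i,j):m_i=m_j\}$. $f:D\to N$ is regressively regular over $E$ ($E^k\subseteq D$) if for each order type class in $E^k$, either $f(x)=f(y)<\min(E)$ for all $x,y$ in the class, or $f(x)\geq\min(x)$ for all $x$ in the class. *)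

theory Defs
  imports Main
begin

definition maxl :: "nat list \<Rightarrow> nat" where
  "maxl z = Max (set z)"

definition minl :: "nat list \<Rightarrow> nat" where
  "minl z = Min (set z)"

definition points :: "nat \<Rightarrow> nat list set" where
  "points k = {x. length x = k}"

definition downward_directed_lattice_graph ::
  "nat \<Rightarrow> (nat list \<times> nat list) set \<Rightarrow> bool" where
  "downward_directed_lattice_graph k \<Theta> \<longleftrightarrow>
     (\<forall>(x, y) \<in> \<Theta>. x \<in> points k \<and> y \<in> points k \<and> maxl x > maxl y)"

definition partial_selection_function ::
  "nat \<Rightarrow> nat \<Rightarrow> (nat list \<Rightarrow> (nat list \<times> nat) list \<Rightarrow> nat option) \<Rightarrow> bool" where
  "partial_selection_function k r F \<longleftrightarrow>
     (\<forall>x ys v. x \<in> points k \<and> length ys = r \<and> (\<forall>(y, n) \<in> set ys. y \<in> points k)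
        \<and> F x ys = Some v \<longrightarrow> v \<in> snd ` set ys)"

definition Theta_D :: "(nat list \<times> nat list) set \<Rightarrow> nat list set \<Rightarrow> (nat list \<times> nat list) set" where
  "Theta_D \<Theta> D = {(x, y). (x, y) \<in> \<Theta> \<and> x \<in> D \<and> y \<in> D}"

definition G_D :: "(nat list \<times> nat list) set \<Rightarrow> nat list set \<Rightarrow> nat list \<Rightarrow> nat list set" where
  "G_D \<Theta> D z = {x. (z, x) \<in> Theta_D \<Theta> D}"

text \<open>Recursive construction with fuel: stage returns the pair (Phi_z, value at z).
  Called with fuel Suc (maxl z) at z; along edges maxl strictly decreases, so the fuel never
  runs out, and this realises the recursion on max(z). The parameter dflt is the value used
  when Phi_z is empty (maxl for s-hat, rho for h).\<close>

primrec stage :: "nat \<Rightarrow> (nat list \<Rightarrow> (nat list \<times> nat) list \<Rightarrow> nat option) \<Rightarrow> nat \<Rightarrow>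
    (nat list \<times> nat list) set \<Rightarrow> nat list set \<Rightarrow> (nat list \<Rightarrow> nat) \<Rightarrow> nat list \<Rightarrow> nat set \<times> nat" where
  "stage 0 F r \<Theta> D dflt z = ({}, dflt z)"
| "stage (Suc m) F r \<Theta> D dflt z =
     (let Phi = {v. \<exists>ys. length ys = r \<and>
                     (\<forall>(y, n) \<in> set ys. y \<in> G_D \<Theta> D z \<and>
                        n = (if fst (stage m F r \<Theta> D dflt y) \<noteq> {}
                             then snd (stage m F r \<Theta> D dflt y) else minl y)) \<and>
                     F z ys = Some v}
      in (Phi, if Phi = {} then dflt z else Min Phi))"

definition PhiG where
  "PhiG F r \<Theta> D dflt z = fst (stage (Suc (maxl z)) F r \<Theta> D dflt z)"

definition hG where
  "hG F r \<Theta> D dflt z = snd (stage (Suc (maxl z)) F r \<Theta> D dflt z)"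

definition Phi_D where "Phi_D F r \<Theta> D z = PhiG F r \<Theta> D maxl z"
definition s_hat where "s_hat F r \<Theta> D z = hG F r \<Theta> D maxl z"
definition h_rho where "h_rho F r \<Theta> D \<rho> z = hG F r \<Theta> D \<rho> z"

definition order_equiv :: "nat list \<Rightarrow> nat list \<Rightarrow> bool" where
  "order_equiv x y \<longleftrightarrow> length x = length y \<and>
     {(i, j). i < length x \<and> j < length x \<and> x ! i < x ! j} =
     {(i, j). i < length y \<and> j < length y \<and> y ! i < y ! j} \<and>
     {(i, j). i < length x \<and> j < length x \<and> x ! i = x ! j} =
     {(i, j). i < length y \<and> j < length y \<and> y ! i = y ! j}"

definition cube :: "nat set \<Rightarrow> nat \<Rightarrow> nat list set" where
  "cube E k = {x. length x = k \<and> set x \<subseteq> E}"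

definition regressively_regular :: "nat \<Rightarrow> (nat list \<Rightarrow> nat) \<Rightarrow> nat set \<Rightarrow> bool" where
  "regressively_regular k f E \<longleftrightarrow>
     (\<forall>x \<in> cube E k. let C = {y \<in> cube E k. order_equiv x y} in
        (\<forall>y \<in> C. \<forall>y' \<in> C. f y = f y' \<and> f y < Min E) \<or> (\<forall>y \<in> C. f y \<ge> minl y))"

end

theory Submission
  imports Defs
begin

lemma minmax: "y \<noteq> [] \<Longrightarrow> minl y \<le> maxl y"
  unfolding minl_def maxl_def by (simp add: Min_le_iff)

lemma helper: "fst (P, if P = {} then (a::nat) else Min P) = fst (P, if P = {} then b else Min P) \<and>
  (fst (P, if P = {} then a else Min P) \<noteq> {} \<longrightarrow> snd (P, if P = {} then a else Min P) = snd (P, if P = {} then b else Min P))"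
  by simp

lemma stage_indep:
 "fst (stage m F r \<Theta> D d1 y) = fst (stage m F r \<Theta> D d2 y) \<and> (fst (stage m F r \<Theta> D d1 y) \<noteq> {} \<longrightarrow> snd (stage m F r \<Theta> D d1 y) = snd (stage m F r \<Theta> D d2 y))"
proof (induction m arbitrary: y)
  case 0 show ?case by simp
next
  case (Suc m)
  have e: "\<And>y. (if fst (stage m F r \<Theta> D d1 y) \<noteq> {} then snd (stage m F r \<Theta> D d1 y) else minl y) = (if fst (stage m F r \<Theta> D d2 y) \<noteq> {} then snd (stage m F r \<Theta> D d2 y) else minl y)"
    using Suc.IH by metis
  show ?case unfolding stage.simps Let_def e by (rule helper)
qed

lemma stage_bound:
  assumes k: "k \<ge> 1" and dg: "downward_directed_lattice_graph k \<Theta>"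
    and psf: "partial_selection_function k r F"
    and fin: "finite D" and Dp: "D \<subseteq> points k"
  shows "\<forall>y\<in>D. finite (fst (stage m F r \<Theta> D d y)) \<and> (\<forall>v\<in>fst (stage m F r \<Theta> D d y). v < maxl y)
     \<and> (fst (stage m F r \<Theta> D d y) \<noteq> {} \<longrightarrow> snd (stage m F r \<Theta> D d y) = Min (fst (stage m F r \<Theta> D d y)))"
proof (induction m)
  case 0 show ?case by simp
next
  case (Suc m)
  show ?case
  proof
    fix z assume zD: "z \<in> D"
    define g where "g = (\<lambda>y. if fst (stage m F r \<Theta> D d y) \<noteq> {} then snd (stage m F r \<Theta> D d y) else minl y)"
    define Phi where "Phi = {v. \<exists>ys. length ys = r \<and>
                     (\<forall>(y, n) \<in> set ys. y \<in> G_D \<Theta> D z \<and> n = g y) \<and> F z ys = Some v}"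
    have st: "stage (Suc m) F r \<Theta> D d z = (Phi, if Phi = {} then d z else Min Phi)"
      unfolding stage.simps Let_def Phi_def g_def by simp
    have GD: "\<And>y. y \<in> G_D \<Theta> D z \<Longrightarrow> y \<in> D \<and> maxl y < maxl z"
      using dg unfolding G_D_def Theta_D_def downward_directed_lattice_graph_def by auto
    have gb: "g y < maxl z" if "y \<in> G_D \<Theta> D z" for y
    proof -
      from GD[OF that] have yD: "y \<in> D" and lt: "maxl y < maxl z" by auto
      have "y \<noteq> []" using yD Dp k unfolding points_def by auto
      hence mm: "minl y \<le> maxl y" by (rule minmax)
      show ?thesis
      proof (cases "fst (stage m F r \<Theta> D d y) \<noteq> {}")
        case True
        with Suc.IH yD have "snd (stage m F r \<Theta> D d y) \<in> fst (stage m F r \<Theta> D d y)"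
          "\<forall>v\<in>fst (stage m F r \<Theta> D d y). v < maxl y" by auto
        then show ?thesis using True lt unfolding g_def by auto
      next
        case False then show ?thesis using mm lt unfolding g_def by auto
      qed
    qed
    have sub: "Phi \<subseteq> g ` G_D \<Theta> D z"
    proof
      fix v assume "v \<in> Phi"
      then obtain ys where ys: "length ys = r" "\<forall>(y, n) \<in> set ys. y \<in> G_D \<Theta> D z \<and> n = g y"
        "F z ys = Some v" unfolding Phi_def by auto
      have "\<forall>(y, n) \<in> set ys. y \<in> points k" using ys(2) GD Dp by fastforce
      moreover have "z \<in> points k" using zD Dp by auto
      ultimately have "v \<in> snd ` set ys" using psf ys unfolding partial_selection_function_def by blast
      then obtain y n where "(y, n) \<in> set ys" "v = n" by auto
      with ys(2) show "v \<in> g ` G_D \<Theta> D z" by auto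
    qed
    have fG: "finite (G_D \<Theta> D z)"
      using GD fin by (meson finite_subset subsetI)
    have f: "finite Phi" using sub fG finite_subset by blast
    have b: "\<forall>v\<in>Phi. v < maxl z" using sub gb by auto
    show "finite (fst (stage (Suc m) F r \<Theta> D d z)) \<and> (\<forall>v\<in>fst (stage (Suc m) F r \<Theta> D d z). v < maxl z)
     \<and> (fst (stage (Suc m) F r \<Theta> D d z) \<noteq> {} \<longrightarrow> snd (stage (Suc m) F r \<Theta> D d z) = Min (fst (stage (Suc m) F r \<Theta> D d z)))"
      unfolding st using f b by simp
  qed
qed

theorem mainTheorem2:
  fixes r k :: nat and \<Theta> :: "(nat list \<times> nat list) set"
    and F :: "nat list \<Rightarrow> (nat list \<times> nat) list \<Rightarrow> nat option"
    and D :: "nat list set" and \<rho> :: "nat list \<Rightarrow> nat"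
  assumes "r \<ge> 1" and "k \<ge> 2"
    and "downward_directed_lattice_graph k \<Theta>"
    and "partial_selection_function k r F"
    and "finite D" and "D \<subseteq> points k"
    and "\<forall>x \<in> D. \<rho> x \<ge> minl x"
  shows "(\<forall>z \<in> D.
            (Phi_D F r \<Theta> D z \<noteq> {} \<longrightarrow>
               h_rho F r \<Theta> D \<rho> z = s_hat F r \<Theta> D z \<and> s_hat F r \<Theta> D z < maxl z) \<and>
            (Phi_D F r \<Theta> D z = {} \<longrightarrow>
               h_rho F r \<Theta> D \<rho> z = \<rho> z \<and> s_hat F r \<Theta> D z = maxl z))
       \<and> (\<forall>E p. finite E \<and> card E = p \<and> p \<ge> 2 \<and> cube E k \<subseteq> D \<longrightarrow>
            (regressively_regular k (s_hat F r \<Theta> D) E \<longleftrightarrow>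
             regressively_regular k (h_rho F r \<Theta> D \<rho>) E))"
proof -
  have k1: "k \<ge> 1" using assms(2) by simp
  have P1: "\<forall>z \<in> D.
            (Phi_D F r \<Theta> D z \<noteq> {} \<longrightarrow>
               h_rho F r \<Theta> D \<rho> z = s_hat F r \<Theta> D z \<and> s_hat F r \<Theta> D z < maxl z) \<and>
            (Phi_D F r \<Theta> D z = {} \<longrightarrow>
               h_rho F r \<Theta> D \<rho> z = \<rho> z \<and> s_hat F r \<Theta> D z = maxl z)"
  proof
    fix z assume zD: "z \<in> D"
    let ?m = "Suc (maxl z)"
    have ind: "fst (stage ?m F r \<Theta> D maxl z) = fst (stage ?m F r \<Theta> D \<rho> z) \<and> (fst (stage ?m F r \<Theta> D maxl z) \<noteq> {} \<longrightarrow> snd (stage ?m F r \<Theta> D maxl z) = snd (stage ?m F r \<Theta> D \<rho> z))"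
      by (rule stage_indep)
    have bd: "finite (fst (stage ?m F r \<Theta> D maxl z)) \<and> (\<forall>v\<in>fst (stage ?m F r \<Theta> D maxl z). v < maxl z)
     \<and> (fst (stage ?m F r \<Theta> D maxl z) \<noteq> {} \<longrightarrow> snd (stage ?m F r \<Theta> D maxl z) = Min (fst (stage ?m F r \<Theta> D maxl z)))"
      using stage_bound[OF k1 assms(3,4,5,6)] zD by blast
    have e1: "fst (stage ?m F r \<Theta> D d z) = {} \<Longrightarrow> snd (stage ?m F r \<Theta> D d z) = d z" for d
      by (simp add: Let_def)
    show "(Phi_D F r \<Theta> D z \<noteq> {} \<longrightarrow>
               h_rho F r \<Theta> D \<rho> z = s_hat F r \<Theta> D z \<and> s_hat F r \<Theta> D z < maxl z) \<and>
            (Phi_D F r \<Theta> D z = {} \<longrightarrow>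
               h_rho F r \<Theta> D \<rho> z = \<rho> z \<and> s_hat F r \<Theta> D z = maxl z)"
      unfolding Phi_D_def h_rho_def s_hat_def PhiG_def hG_def
      using ind bd e1[of maxl] e1[of \<rho>] Min_in[of "fst (stage ?m F r \<Theta> D maxl z)"] by (auto simp del: stage.simps)
  qed
  have key: "\<forall>y\<in>D. s_hat F r \<Theta> D y = h_rho F r \<Theta> D \<rho> y \<or>
     (s_hat F r \<Theta> D y \<ge> minl y \<and> h_rho F r \<Theta> D \<rho> y \<ge> minl y)"
  proof
    fix y assume yD: "y \<in> D"
    have "y \<noteq> []" using yD assms(6) k1 unfolding points_def by auto
    hence "minl y \<le> maxl y" by (rule minmax)
    then show "s_hat F r \<Theta> D y = h_rho F r \<Theta> D \<rho> y \<or>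
     (s_hat F r \<Theta> D y \<ge> minl y \<and> h_rho F r \<Theta> D \<rho> y \<ge> minl y)"
      using P1 yD assms(7) by metis
  qed
  have P2: "regressively_regular k (s_hat F r \<Theta> D) E \<longleftrightarrow>
             regressively_regular k (h_rho F r \<Theta> D \<rho>) E"
    if E: "finite E" "cube E k \<subseteq> D" for E
  proof -
    have minE: "Min E \<le> minl y" if "y \<in> cube E k" for y
    proof -
      have "y \<noteq> []" "set y \<subseteq> E" using that k1 unfolding cube_def by auto
      then have "minl y \<in> E" unfolding minl_def using Min_in by blast
      then show ?thesis using E(1) by simp
    qed
    have gen: "regressively_regular k f2 E"
      if R: "regressively_regular k f1 E" and
         kk: "\<forall>y\<in>cube E k. f1 y = f2 y \<or> (f1 y \<ge> minl y \<and> f2 y \<ge> minl y)" for f1 f2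
      unfolding regressively_regular_def Let_def
    proof
      fix x assume x: "x \<in> cube E k"
      let ?C = "{y \<in> cube E k. order_equiv x y}"
      from R x have "(\<forall>y \<in> ?C. \<forall>y' \<in> ?C. f1 y = f1 y' \<and> f1 y < Min E) \<or> (\<forall>y \<in> ?C. f1 y \<ge> minl y)"
        unfolding regressively_regular_def Let_def by blast
      then show "(\<forall>y \<in> ?C. \<forall>y' \<in> ?C. f2 y = f2 y' \<and> f2 y < Min E) \<or> (\<forall>y \<in> ?C. f2 y \<ge> minl y)"
      proof
        assume A: "\<forall>y \<in> ?C. \<forall>y' \<in> ?C. f1 y = f1 y' \<and> f1 y < Min E"
        have eq: "f1 y = f2 y" if "y \<in> ?C" for y
        proof -
          have "f1 y < Min E" using A that by blast
          moreover have "Min E \<le> minl y" using minE that by blast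
          ultimately show ?thesis using kk that by fastforce
        qed
        show ?thesis using A eq by (metis (no_types, lifting))
      next
        assume A: "\<forall>y \<in> ?C. f1 y \<ge> minl y"
        show ?thesis using A kk by fastforce
      qed
    qed
    have k2: "\<forall>y\<in>cube E k. s_hat F r \<Theta> D y = h_rho F r \<Theta> D \<rho> y \<or>
     (s_hat F r \<Theta> D y \<ge> minl y \<and> h_rho F r \<Theta> D \<rho> y \<ge> minl y)" using key E(2) by blast
    have k3: "\<forall>y\<in>cube E k. h_rho F r \<Theta> D \<rho> y = s_hat F r \<Theta> D y \<or>
     (h_rho F r \<Theta> D \<rho> y \<ge> minl y \<and> s_hat F r \<Theta> D y \<ge> minl y)" using k2 by metis
    show ?thesis using gen[OF _ k2] gen[OF _ k3] by blast
  qed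
  show ?thesis using P1 P2 by blast
qed

end
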